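(* Let $B$ be any group and $p\ge 2$ an integer. If $w\in(B\wr C_p)'$, then $w$ can be written in wreath-recursion form as $$w=\Big(r_1,r_2,\dots,r_{p-1},\ r_1^{-1}\cdots r_{p-1}^{-1}\prod_{j=1}^{k}[f_j,g_j]\Big),$$ where $r_1,\dots,r_{p-1},f_j,g_j\in B$ and $k\le cw(B)$.
   Context: $B\wr C_p=B^p\rtimes C_p$ with $C_p$ acting on $\{1,\dots,p\}$ by cyclic shifts; elements are written $(g_1,\dots,g_p)\pi$ with multiplication $(g_1,\dots,g_p)\pi\cdot(h_1,\dots,h_p)\tau=(g_1h_{\pi(1)},\dots,g_ph_{\pi(p)})\pi\tau$. $[a,b]=aba^{-1}b^{-1}$. The commutator width $cw(G)$ of a group $G$ is the least $n$ such that every element of $G'$ is a product of at most $n$ commutators ($\infty$ if no such $n$ exists). *)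

theory Defs
  imports "HOL-Algebra.Algebra" "HOL-Library.Extended_Nat" "HOL-Library.FuncSet"
begin

text \<open>Commutator [a,b] = a b a^-1 b^-1 (same convention as derived_set in HOL-Algebra).\<close>
definition commutator :: "('a, 'b) monoid_scheme \<Rightarrow> 'a \<Rightarrow> 'a \<Rightarrow> 'a" where
  "commutator G a b = a \<otimes>\<^bsub>G\<^esub> b \<otimes>\<^bsub>G\<^esub> inv\<^bsub>G\<^esub> a \<otimes>\<^bsub>G\<^esub> inv\<^bsub>G\<^esub> b"

definition prod_listG :: "('a, 'b) monoid_scheme \<Rightarrow> 'a list \<Rightarrow> 'a" where
  "prod_listG G xs = foldr (\<lambda>x acc. x \<otimes>\<^bsub>G\<^esub> acc) xs \<one>\<^bsub>G\<^esub>"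

definition comm_prod :: "('a, 'b) monoid_scheme \<Rightarrow> ('a \<times> 'a) list \<Rightarrow> 'a" where
  "comm_prod G cs = prod_listG G (map (\<lambda>(f, g). commutator G f g) cs)"

definition cw_bound :: "('a, 'b) monoid_scheme \<Rightarrow> nat \<Rightarrow> bool" where
  "cw_bound G n \<longleftrightarrow> (\<forall>x \<in> derived G (carrier G). \<exists>cs. length cs \<le> n \<and>
      set cs \<subseteq> carrier G \<times> carrier G \<and> x = comm_prod G cs)"

definition commutator_width :: "('a, 'b) monoid_scheme \<Rightarrow> enat" where
  "commutator_width G = (if \<exists>n. cw_bound G n then enat (LEAST n. cw_bound G n) else \<infinity>)"

text \<open>Element (g, a) stands for (g_0,...,g_{p-1}) \<pi>
  with \<pi> the cyclic shift i \<mapsto> i + a mod p. Coordinates are indexed by {0..<p}.\<close>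
definition wreath :: "('a, 'b) monoid_scheme \<Rightarrow> nat \<Rightarrow> ((nat \<Rightarrow> 'a) \<times> nat) monoid" where
  "wreath B p = \<lparr> carrier = ({0..<p} \<rightarrow>\<^sub>E carrier B) \<times> {0..<p},
      monoid.mult = (\<lambda>x y. ((\<lambda>i\<in>{0..<p}. fst x i \<otimes>\<^bsub>B\<^esub> fst y ((i + snd x) mod p)),
                        (snd x + snd y) mod p)),
      one = ((\<lambda>i\<in>{0..<p}. \<one>\<^bsub>B\<^esub>), 0) \<rparr>"

end

theory Submission
  imports Defs
begin

lemma wreath_simps:
  "carrier (wreath B p) = ({0..<p} \<rightarrow>\<^sub>E carrier B) \<times> {0..<p}"
  "x \<otimes>\<^bsub>wreath B p\<^esub> y = ((\<lambda>i\<in>{0..<p}. fst x i \<otimes>\<^bsub>B\<^esub> fst y ((i + snd x) mod p)),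
                        (snd x + snd y) mod p)"
  "\<one>\<^bsub>wreath B p\<^esub> = ((\<lambda>i\<in>{0..<p}. \<one>\<^bsub>B\<^esub>), 0)"
  by (simp_all add: wreath_def)

lemma wreath_group:
  assumes gB: "group B" and p: "p > 0"
  shows "group (wreath B p)"
proof (rule groupI)
  interpret B: group B by (rule gB)
  fix x y assume x: "x \<in> carrier (wreath B p)" and y: "y \<in> carrier (wreath B p)"
  then show "x \<otimes>\<^bsub>wreath B p\<^esub> y \<in> carrier (wreath B p)"
    using p by (auto simp: wreath_simps PiE_def Pi_def)
next
  interpret B: group B by (rule gB)
  show "\<one>\<^bsub>wreath B p\<^esub> \<in> carrier (wreath B p)" using p by (auto simp: wreath_simps)
next
  interpret B: group B by (rule gB)
  fix x y z assume x: "x \<in> carrier (wreath B p)" and y: "y \<in> carrier (wreath B p)"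
    and z: "z \<in> carrier (wreath B p)"
  have m: "((i + a) mod p + b) mod p = (i + (a + b) mod p) mod p" for i a b :: nat
    by (simp add: mod_simps add.assoc)
  show "x \<otimes>\<^bsub>wreath B p\<^esub> y \<otimes>\<^bsub>wreath B p\<^esub> z = x \<otimes>\<^bsub>wreath B p\<^esub> (y \<otimes>\<^bsub>wreath B p\<^esub> z)"
    using x y z p by (auto simp: wreath_simps PiE_def Pi_def m B.m_assoc mod_simps add.assoc intro!: ext)
next
  interpret B: group B by (rule gB)
  fix x assume x: "x \<in> carrier (wreath B p)"
  then show "\<one>\<^bsub>wreath B p\<^esub> \<otimes>\<^bsub>wreath B p\<^esub> x = x"
    using p by (auto simp: wreath_simps PiE_def Pi_def extensional_def intro!: ext)
next
  interpret B: group B by (rule gB)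
  fix x assume x: "x \<in> carrier (wreath B p)"
  define b where "b = (p - snd x) mod p"
  define y where "y = ((\<lambda>i\<in>{0..<p}. inv\<^bsub>B\<^esub> fst x ((i + b) mod p)), b)"
  have "y \<in> carrier (wreath B p)" using x p by (auto simp: y_def b_def wreath_simps PiE_def Pi_def)
  moreover have "y \<otimes>\<^bsub>wreath B p\<^esub> x = \<one>\<^bsub>wreath B p\<^esub>"
    using x p by (auto simp: y_def b_def wreath_simps PiE_def Pi_def mod_simps intro!: ext)
  ultimately show "\<exists>y\<in>carrier (wreath B p). y \<otimes>\<^bsub>wreath B p\<^esub> x = \<one>\<^bsub>wreath B p\<^esub>" by blast
qed

lemma derived_to_comm:
  assumes W: "group W" and A: "comm_group A" and f: "f \<in> hom W A"
    and x: "x \<in> derived W (carrier W)"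
  shows "f x = \<one>\<^bsub>A\<^esub>"
proof -
  interpret W: group W by (rule W)
  interpret A: comm_group A by (rule A)
  interpret h: group_hom W A f using W A.group_axioms f by (simp add: group_hom_def group_hom_axioms_def)
  have sub: "subgroup (kernel W A f) W" by (rule h.subgroup_kernel)
  have "derived_set W (carrier W) \<subseteq> kernel W A f"
  proof
    fix z assume "z \<in> derived_set W (carrier W)"
    then obtain a b where ab: "a \<in> carrier W" "b \<in> carrier W"
      "z = a \<otimes>\<^bsub>W\<^esub> b \<otimes>\<^bsub>W\<^esub> inv\<^bsub>W\<^esub> a \<otimes>\<^bsub>W\<^esub> inv\<^bsub>W\<^esub> b" by blast
    have "f z = f a \<otimes>\<^bsub>A\<^esub> f b \<otimes>\<^bsub>A\<^esub> inv\<^bsub>A\<^esub> f a \<otimes>\<^bsub>A\<^esub> inv\<^bsub>A\<^esub> f b"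
      using ab by (simp add: h.hom_mult h.hom_inv)
    also have "\<dots> = \<one>\<^bsub>A\<^esub>"
    proof -
      have fa: "f a \<in> carrier A" and fb: "f b \<in> carrier A" using ab by auto
      have "f a \<otimes>\<^bsub>A\<^esub> f b \<otimes>\<^bsub>A\<^esub> inv\<^bsub>A\<^esub> f a \<otimes>\<^bsub>A\<^esub> inv\<^bsub>A\<^esub> f b
          = f b \<otimes>\<^bsub>A\<^esub> f a \<otimes>\<^bsub>A\<^esub> inv\<^bsub>A\<^esub> f a \<otimes>\<^bsub>A\<^esub> inv\<^bsub>A\<^esub> f b"
        using fa fb A.m_comm[of "f a" "f b"] by simp
      also have "\<dots> = \<one>\<^bsub>A\<^esub>" using fa fb by (simp add: A.m_assoc A.r_inv)
      finally show ?thesis .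
    qed
    finally show "z \<in> kernel W A f" using ab by (simp add: kernel_def)
  qed
  then have "derived W (carrier W) \<subseteq> kernel W A f"
    unfolding derived_def by (rule W.generate_subgroup_incl[OF _ sub])
  then show ?thesis using x by (auto simp: kernel_def)
qed

definition cyc :: "nat \<Rightarrow> nat monoid" where
  "cyc p = \<lparr> carrier = {0..<p}, monoid.mult = (\<lambda>a b. (a + b) mod p), one = 0 \<rparr>"

lemma cyc_comm_group:
  assumes p: "p > 0" shows "comm_group (cyc p)"
proof (rule comm_groupI)
  fix x assume x: "x \<in> carrier (cyc p)"
  show "\<exists>y\<in>carrier (cyc p). y \<otimes>\<^bsub>cyc p\<^esub> x = \<one>\<^bsub>cyc p\<^esub>"
    using x p by (intro bexI[of _ "(p - x) mod p"]) (auto simp: cyc_def mod_simps)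
next
  fix x y z assume "x \<in> carrier (cyc p)" "y \<in> carrier (cyc p)" "z \<in> carrier (cyc p)"
  show "x \<otimes>\<^bsub>cyc p\<^esub> y \<otimes>\<^bsub>cyc p\<^esub> z = x \<otimes>\<^bsub>cyc p\<^esub> (y \<otimes>\<^bsub>cyc p\<^esub> z)"
    by (simp add: cyc_def mod_add_left_eq mod_add_right_eq add.assoc)
next
  fix x y assume "x \<in> carrier (cyc p)" "y \<in> carrier (cyc p)"
  show "x \<otimes>\<^bsub>cyc p\<^esub> y = y \<otimes>\<^bsub>cyc p\<^esub> x" by (simp add: cyc_def add.commute)
qed (use p in \<open>auto simp: cyc_def\<close>)

lemma snd_hom:
  assumes p: "p > 0" shows "snd \<in> hom (wreath B p) (cyc p)"
  using p by (auto simp: hom_def wreath_simps cyc_def)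

lemma shift_back:
  assumes "i < (p::nat)" shows "((i + a) mod p + (p - a mod p)) mod p = i"
proof -
  have p: "p > 0" using assms by simp
  have "((i + a) mod p + (p - a mod p)) mod p = (i + a + (p - a mod p)) mod p"
    by (simp add: mod_add_left_eq)
  also have "i + a + (p - a mod p) = i + (a div p + 1) * p"
  proof -
    have e: "a = (a div p) * p + a mod p" by simp
    have l: "a mod p < p" using p by simp
    have "a + (p - a mod p) = a div p * p + p" using e l by arith
    then show ?thesis by (simp add: algebra_simps)
  qed
  also have "(i + (a div p + 1) * p) mod p = i" using assms by (simp only: mod_mult_self1) simp
  finally show ?thesis .
qed
lemma shift_inj: "inj_on (\<lambda>i. (i + a) mod p) {..<(p::nat)}"
  apply (rule inj_on_inverseI[where g="\<lambda>j. (j + (p - a mod p)) mod p"])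
  apply (rule shift_back) apply simp done
lemma shift_img: "(\<lambda>i. (i + a) mod p) ` {..<p} = {..<(p::nat)}"
proof
  show "(\<lambda>i. (i + a) mod p) ` {..<p} \<subseteq> {..<p}" by auto
  show "{..<p} \<subseteq> (\<lambda>i. (i + a) mod p) ` {..<p}"
  proof
    fix j assume j: "j \<in> {..<p}"
    have "j = ((j + (p - a mod p)) mod p + a) mod p"
    proof -
      have "((j + (p - a mod p)) mod p + a) mod p = (j + (p - a mod p) + a) mod p" by (simp add: mod_add_left_eq)
      also have "j + (p - a mod p) + a = j + a + (p - a mod p)" by simp
      also have "(j + a + (p - a mod p)) mod p = ((j + a) mod p + (p - a mod p)) mod p" by (simp add: mod_add_left_eq)
      also have "\<dots> = j" using j by (intro shift_back) simp
      finally show ?thesis by simp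
    qed
    moreover have "(j + (p - a mod p)) mod p \<in> {..<p}" using j by auto
    ultimately show "j \<in> (\<lambda>i. (i + a) mod p) ` {..<p}" by blast
  qed
qed

lemma Psi_hom:
  assumes gB: "group B" and p: "p > 0" and N: "N \<lhd> B" and Q: "comm_group (B Mod N)"
  shows "(\<lambda>w. finprod (B Mod N) (\<lambda>i. N #>\<^bsub>B\<^esub> fst w i) {..<p}) \<in> hom (wreath B p) (B Mod N)"
proof -
  interpret B: group B by (rule gB)
  interpret N: normal N B by (rule N)
  interpret Q: comm_group "B Mod N" by (rule Q)
  interpret h: group_hom B "B Mod N" "\<lambda>a. N #>\<^bsub>B\<^esub> a"
    using N.r_coset_hom_Mod Q.group_axioms gB by (simp add: group_hom_def group_hom_axioms_def)
  have fc: "fst x i \<in> carrier B" if "x \<in> carrier (wreath B p)" "i < p" for x i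
    using that by (auto simp: wreath_simps PiE_def Pi_def)
  have Pc: "(\<lambda>i. N #>\<^bsub>B\<^esub> fst x i) \<in> {..<p} \<rightarrow> carrier (B Mod N)" if "x \<in> carrier (wreath B p)" for x
    using fc[OF that] by auto
  show ?thesis unfolding hom_def
  proof (intro CollectI conjI ballI)
    show "(\<lambda>w. finprod (B Mod N) (\<lambda>i. N #>\<^bsub>B\<^esub> fst w i) {..<p}) \<in> carrier (wreath B p) \<rightarrow> carrier (B Mod N)"
      using Pc by (auto intro: Q.finprod_closed)
    fix x y assume x: "x \<in> carrier (wreath B p)" and y: "y \<in> carrier (wreath B p)"
    have sx: "snd x < p" using x by (auto simp: wreath_simps)
    let ?s = "\<lambda>i. (i + snd x) mod p"
    have "finprod (B Mod N) (\<lambda>i. N #>\<^bsub>B\<^esub> fst (x \<otimes>\<^bsub>wreath B p\<^esub> y) i) {..<p}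
        = finprod (B Mod N) (\<lambda>i. (N #>\<^bsub>B\<^esub> fst x i) \<otimes>\<^bsub>B Mod N\<^esub> (N #>\<^bsub>B\<^esub> fst y (?s i))) {..<p}"
    proof (rule Q.finprod_cong')
      show "(\<lambda>i. (N #>\<^bsub>B\<^esub> fst x i) \<otimes>\<^bsub>B Mod N\<^esub> (N #>\<^bsub>B\<^esub> fst y (?s i))) \<in> {..<p} \<rightarrow> carrier (B Mod N)"
        using fc[OF x] fc[OF y] p by (intro Pi_I Q.m_closed h.hom_closed) auto
      fix i assume "i \<in> {..<p}"
      then show "N #>\<^bsub>B\<^esub> fst (x \<otimes>\<^bsub>wreath B p\<^esub> y) i = (N #>\<^bsub>B\<^esub> fst x i) \<otimes>\<^bsub>B Mod N\<^esub> (N #>\<^bsub>B\<^esub> fst y (?s i))"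
        using fc[OF x] fc[OF y] p by (simp add: wreath_simps h.hom_mult)
    qed simp
    also have "\<dots> = finprod (B Mod N) (\<lambda>i. N #>\<^bsub>B\<^esub> fst x i) {..<p} \<otimes>\<^bsub>B Mod N\<^esub>
        finprod (B Mod N) (\<lambda>i. N #>\<^bsub>B\<^esub> fst y (?s i)) {..<p}"
      by (rule Q.finprod_multf) (use fc[OF x] fc[OF y] p in auto)
    also have "finprod (B Mod N) (\<lambda>i. N #>\<^bsub>B\<^esub> fst y (?s i)) {..<p}
        = finprod (B Mod N) (\<lambda>i. N #>\<^bsub>B\<^esub> fst y i) (?s ` {..<p})"
      by (rule Q.finprod_reindex[symmetric]) (use fc[OF y] p shift_inj in auto)
    also have "?s ` {..<p} = {..<p}" by (rule shift_img)
    finally show "finprod (B Mod N) (\<lambda>i. N #>\<^bsub>B\<^esub> fst (x \<otimes>\<^bsub>wreath B p\<^esub> y) i) {..<p}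
        = finprod (B Mod N) (\<lambda>i. N #>\<^bsub>B\<^esub> fst x i) {..<p} \<otimes>\<^bsub>B Mod N\<^esub>
          finprod (B Mod N) (\<lambda>i. N #>\<^bsub>B\<^esub> fst y i) {..<p}" .
  qed
qed

lemma prod_listG_closed:
  assumes "group B" "set xs \<subseteq> carrier B" shows "prod_listG B xs \<in> carrier B"
  using assms by (induction xs) (auto simp: prod_listG_def group.is_monoid intro: monoid.m_closed)

lemma prod_listG_append:
  assumes gB: "group B" "set xs \<subseteq> carrier B" "set ys \<subseteq> carrier B"
  shows "prod_listG B (xs @ ys) = prod_listG B xs \<otimes>\<^bsub>B\<^esub> prod_listG B ys"
proof -
  interpret B: group B by (rule gB)
  show ?thesis using assms(2)
  proof (induction xs)
    case Nil then show ?case using prod_listG_closed[OF gB(1) assms(3)] by (simp add: prod_listG_def)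
  next
    case (Cons a xs)
    then show ?case using prod_listG_closed[OF gB(1) assms(3)] prod_listG_closed[OF gB(1), of xs]
      by (simp add: prod_listG_def B.m_assoc)
  qed
qed

lemma derived_comm_prod:
  assumes gB: "group B" and x: "x \<in> derived B (carrier B)"
  shows "\<exists>cs. set cs \<subseteq> carrier B \<times> carrier B \<and> x = comm_prod B cs"
proof -
  interpret B: group B by (rule gB)
  have cpc: "set cs \<subseteq> carrier B \<times> carrier B \<Longrightarrow> comm_prod B cs \<in> carrier B" for cs
    unfolding comm_prod_def by (rule prod_listG_closed[OF gB]) (auto simp: commutator_def)
  from x show ?thesis unfolding derived_def
  proof (induction rule: generate.induct)
    case one
    show ?case by (intro exI[of _ "[]"]) (simp add: comm_prod_def prod_listG_def)
  next
    case (incl h)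
    then obtain a b where ab: "a \<in> carrier B" "b \<in> carrier B"
      "h = a \<otimes>\<^bsub>B\<^esub> b \<otimes>\<^bsub>B\<^esub> inv\<^bsub>B\<^esub> a \<otimes>\<^bsub>B\<^esub> inv\<^bsub>B\<^esub> b" by blast
    then show ?case
      by (intro exI[of _ "[(a, b)]"]) (simp add: comm_prod_def prod_listG_def commutator_def)
  next
    case (inv h)
    then obtain a b where ab: "a \<in> carrier B" "b \<in> carrier B"
      "h = a \<otimes>\<^bsub>B\<^esub> b \<otimes>\<^bsub>B\<^esub> inv\<^bsub>B\<^esub> a \<otimes>\<^bsub>B\<^esub> inv\<^bsub>B\<^esub> b" by blast
    have "inv\<^bsub>B\<^esub> h = b \<otimes>\<^bsub>B\<^esub> a \<otimes>\<^bsub>B\<^esub> inv\<^bsub>B\<^esub> b \<otimes>\<^bsub>B\<^esub> inv\<^bsub>B\<^esub> a"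
      using ab by (simp add: B.inv_mult_group B.m_assoc)
    then show ?case using ab
      by (intro exI[of _ "[(b, a)]"]) (simp add: comm_prod_def prod_listG_def commutator_def)
  next
    case (eng h1 h2)
    then obtain cs1 cs2 where c: "set cs1 \<subseteq> carrier B \<times> carrier B" "h1 = comm_prod B cs1"
      "set cs2 \<subseteq> carrier B \<times> carrier B" "h2 = comm_prod B cs2" by blast
    have "comm_prod B (cs1 @ cs2) = comm_prod B cs1 \<otimes>\<^bsub>B\<^esub> comm_prod B cs2"
    proof -
      have ab1: "a \<in> carrier B \<and> b \<in> carrier B" if "(a,b) \<in> set cs1" for a b
        using c that by blast
      have ab2: "a \<in> carrier B \<and> b \<in> carrier B" if "(a,b) \<in> set cs2" for a b
        using c that by blast
      show ?thesis unfolding comm_prod_def map_append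
        by (rule prod_listG_append[OF gB]) (auto simp: commutator_def dest!: ab1 ab2)
    qed
    then show ?case using c by (intro exI[of _ "cs1 @ cs2"]) auto
  qed
qed


theorem lemma2:
  fixes B :: "('a, 'b) monoid_scheme" and p :: nat and w :: "(nat \<Rightarrow> 'a) \<times> nat"
  assumes "group B" and "p \<ge> 2"
    and "w \<in> derived (wreath B p) (carrier (wreath B p))"
  shows "\<exists>r cs. (\<forall>i < p - 1. r i \<in> carrier B)
     \<and> set cs \<subseteq> carrier B \<times> carrier B
     \<and> enat (length cs) \<le> commutator_width B
     \<and> w = ((\<lambda>i\<in>{0..<p}. if i < p - 1 then r i
              else prod_listG B (map (\<lambda>j. inv\<^bsub>B\<^esub> r j) [0..<p - 1]) \<otimes>\<^bsub>B\<^esub> comm_prod B cs), 0)"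
proof -
  note gB = assms(1)
  interpret B: group B by (rule gB)
  define N where "N = derived B (carrier B)"
  define Q where "Q = B Mod N"
  have p0: "p > 0" using assms(2) by simp
  have gW: "group (wreath B p)" by (rule wreath_group[OF gB p0])
  interpret W: group "wreath B p" by (rule gW)
  have nN: "N \<lhd> B" unfolding N_def by (rule B.derived_self_is_normal)
  interpret N: normal N B by (rule nN)
  have cQ: "comm_group Q" unfolding Q_def N_def by (rule B.derived_quot_is_comm_group)
  interpret Q: comm_group Q by (rule cQ)
  interpret h: group_hom B Q "\<lambda>a. N #>\<^bsub>B\<^esub> a"
    using N.r_coset_hom_Mod Q.group_axioms gB by (simp add: Q_def group_hom_def group_hom_axioms_def)
  have wc: "w \<in> carrier (wreath B p)"
    using W.derived_in_carrier[of "carrier (wreath B p)"] assms(3) by blast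
  have s0: "snd w = 0"
    using derived_to_comm[OF gW cyc_comm_group[OF p0] snd_hom[OF p0] assms(3)] by (simp add: cyc_def)
  have psi: "finprod Q (\<lambda>i. N #>\<^bsub>B\<^esub> fst w i) {..<p} = \<one>\<^bsub>Q\<^esub>"
    using derived_to_comm[OF gW cQ Psi_hom[OF gB p0 nN cQ[unfolded Q_def], folded Q_def] assms(3)]
    by simp
  define g where "g = fst w"
  have gc: "g i \<in> carrier B" if "i < p" for i
    using wc that by (auto simp: g_def wreath_simps PiE_def Pi_def)
  have gext: "g i = undefined" if "i \<notin> {0..<p}" for i
    using wc that by (auto simp: g_def wreath_simps PiE_def extensional_def)
  define P where "P n = prod_listG B (map (\<lambda>j. inv\<^bsub>B\<^esub> g j) [0..<n])" for n
  have Pc: "P n \<in> carrier B" if "n \<le> p" for n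
    unfolding P_def using that gc by (intro prod_listG_closed[OF gB]) auto
  have L: "(N #>\<^bsub>B\<^esub> P n) \<otimes>\<^bsub>Q\<^esub> finprod Q (\<lambda>i. N #>\<^bsub>B\<^esub> g i) {..<n} = \<one>\<^bsub>Q\<^esub>"
    if "n \<le> p" for n
    using that
  proof (induction n)
    case 0
    have "N #>\<^bsub>B\<^esub> P 0 = \<one>\<^bsub>Q\<^esub>" by (simp add: P_def prod_listG_def Q_def)
    then show ?case by simp
  next
    case (Suc n)
    have gn: "g n \<in> carrier B" using Suc.prems gc by simp
    have PS: "P (Suc n) = P n \<otimes>\<^bsub>B\<^esub> inv\<^bsub>B\<^esub> g n"
    proof -
      have "P (Suc n) = prod_listG B (map (\<lambda>j. inv\<^bsub>B\<^esub> g j) [0..<n] @ [inv\<^bsub>B\<^esub> g n])"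
        by (simp add: P_def)
      also have "\<dots> = P n \<otimes>\<^bsub>B\<^esub> prod_listG B [inv\<^bsub>B\<^esub> g n]"
        unfolding P_def using Suc.prems gc by (intro prod_listG_append[OF gB]) auto
      finally show ?thesis using gn by (simp add: prod_listG_def)
    qed
    have fP: "(\<lambda>i. N #>\<^bsub>B\<^esub> g i) \<in> {..<n} \<rightarrow> carrier Q" using Suc.prems gc by auto
    have F: "finprod Q (\<lambda>i. N #>\<^bsub>B\<^esub> g i) {..<Suc n}
        = (N #>\<^bsub>B\<^esub> g n) \<otimes>\<^bsub>Q\<^esub> finprod Q (\<lambda>i. N #>\<^bsub>B\<^esub> g i) {..<n}"
      unfolding lessThan_Suc using fP gn by (intro Q.finprod_insert) auto
    define A where "A = N #>\<^bsub>B\<^esub> P n"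
    define G where "G = N #>\<^bsub>B\<^esub> g n"
    define Fn where "Fn = finprod Q (\<lambda>i. N #>\<^bsub>B\<^esub> g i) {..<n}"
    have Ac: "A \<in> carrier Q" using Pc Suc.prems A_def by simp
    have Gc: "G \<in> carrier Q" using gn G_def by simp
    have Fc: "Fn \<in> carrier Q" using fP Fn_def by simp
    have IH: "A \<otimes>\<^bsub>Q\<^esub> Fn = \<one>\<^bsub>Q\<^esub>" using Suc A_def Fn_def by simp
    have "(N #>\<^bsub>B\<^esub> P (Suc n)) = A \<otimes>\<^bsub>Q\<^esub> inv\<^bsub>Q\<^esub> G"
      using PS gn Pc Suc.prems by (simp add: A_def G_def h.hom_mult h.hom_inv)
    then have "(N #>\<^bsub>B\<^esub> P (Suc n)) \<otimes>\<^bsub>Q\<^esub> finprod Q (\<lambda>i. N #>\<^bsub>B\<^esub> g i) {..<Suc n}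
        = A \<otimes>\<^bsub>Q\<^esub> inv\<^bsub>Q\<^esub> G \<otimes>\<^bsub>Q\<^esub> (G \<otimes>\<^bsub>Q\<^esub> Fn)"
      using F G_def Fn_def by simp
    also have "\<dots> = A \<otimes>\<^bsub>Q\<^esub> ((inv\<^bsub>Q\<^esub> G \<otimes>\<^bsub>Q\<^esub> G) \<otimes>\<^bsub>Q\<^esub> Fn)"
    proof -
      have iG: "inv\<^bsub>Q\<^esub> G \<in> carrier Q" using Gc by simp
      have GF: "G \<otimes>\<^bsub>Q\<^esub> Fn \<in> carrier Q" using Gc Fc by simp
      show ?thesis using Q.m_assoc[OF Ac iG GF] Q.m_assoc[OF iG Gc Fc] by simp
    qed
    also have "\<dots> = \<one>\<^bsub>Q\<^esub>" using Ac Gc Fc IH by simp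
    finally show ?case .
  qed
  define x where "x = g (p - 1)"
  have xc: "x \<in> carrier B" using gc p0 x_def by simp
  define c where "c = inv\<^bsub>B\<^esub> P (p - 1) \<otimes>\<^bsub>B\<^esub> x"
  have Pp: "P (p - 1) \<in> carrier B" using Pc by simp
  have cc: "c \<in> carrier B" using Pp xc c_def by simp
  have "N #>\<^bsub>B\<^esub> c = \<one>\<^bsub>Q\<^esub>"
  proof -
    define A where "A = N #>\<^bsub>B\<^esub> P (p - 1)"
    define XX where "XX = N #>\<^bsub>B\<^esub> x"
    define Fn where "Fn = finprod Q (\<lambda>i. N #>\<^bsub>B\<^esub> g i) {..<p - 1}"
    have fP: "(\<lambda>i. N #>\<^bsub>B\<^esub> g i) \<in> {..<p - 1} \<rightarrow> carrier Q" using gc by auto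
    have Ac: "A \<in> carrier Q" using Pp A_def by simp
    have Xc: "XX \<in> carrier Q" using xc XX_def by simp
    have Fc: "Fn \<in> carrier Q" using fP Fn_def by simp
    have AF: "A \<otimes>\<^bsub>Q\<^esub> Fn = \<one>\<^bsub>Q\<^esub>" using L[of "p - 1"] A_def Fn_def by simp
    have "{..<p} = insert (p - 1) {..<p - 1}" using p0 by auto
    then have "finprod Q (\<lambda>i. N #>\<^bsub>B\<^esub> g i) {..<p} = XX \<otimes>\<^bsub>Q\<^esub> Fn"
      using fP xc by (simp add: XX_def x_def Fn_def g_def)
    then have XF: "XX \<otimes>\<^bsub>Q\<^esub> Fn = \<one>\<^bsub>Q\<^esub>" using psi g_def by simp
    have "N #>\<^bsub>B\<^esub> c = inv\<^bsub>Q\<^esub> A \<otimes>\<^bsub>Q\<^esub> XX"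
      using Pp xc by (simp add: c_def A_def XX_def h.hom_mult h.hom_inv)
    also have "inv\<^bsub>Q\<^esub> A = Fn" using AF Ac Fc by (metis Q.inv_equality Q.m_comm)
    also have "Fn \<otimes>\<^bsub>Q\<^esub> XX = \<one>\<^bsub>Q\<^esub>" using XF Xc Fc Q.m_comm by simp
    finally show ?thesis .
  qed
  then have "c \<in> N"
    using B.coset_join1[OF _ cc N.subgroup_axioms] by (simp add: Q_def)
  then obtain cs where cs: "set cs \<subseteq> carrier B \<times> carrier B" "c = comm_prod B cs"
    "enat (length cs) \<le> commutator_width B"
  proof (cases "\<exists>n. cw_bound B n")
    case True
    define m where "m = (LEAST n. cw_bound B n)"
    have "cw_bound B m" unfolding m_def using True by (rule LeastI_ex)
    with \<open>c \<in> N\<close> obtain cs where "length cs \<le> m" "set cs \<subseteq> carrier B \<times> carrier B" "c = comm_prod B cs"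
      unfolding cw_bound_def N_def by blast
    moreover have "commutator_width B = enat m" using True by (simp add: commutator_width_def m_def)
    ultimately show ?thesis using that by auto
  next
    case False
    obtain cs where "set cs \<subseteq> carrier B \<times> carrier B" "c = comm_prod B cs"
      using derived_comm_prod[OF gB] \<open>c \<in> N\<close> N_def by blast
    moreover have "commutator_width B = \<infinity>" using False by (simp add: commutator_width_def)
    ultimately show ?thesis using that by auto
  qed
  have Peq: "prod_listG B (map (\<lambda>j. inv\<^bsub>B\<^esub> g j) [0..<p - 1]) = P (p - 1)" by (simp add: P_def)
  have "w = ((\<lambda>i\<in>{0..<p}. if i < p - 1 then g i
              else prod_listG B (map (\<lambda>j. inv\<^bsub>B\<^esub> g j) [0..<p - 1]) \<otimes>\<^bsub>B\<^esub> comm_prod B cs), 0)"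
  proof -
    have "P (p - 1) \<otimes>\<^bsub>B\<^esub> c = x" using Pp xc by (simp add: c_def B.m_assoc[symmetric])
    have "fst w = (\<lambda>i\<in>{0..<p}. if i < p - 1 then g i
              else prod_listG B (map (\<lambda>j. inv\<^bsub>B\<^esub> g j) [0..<p - 1]) \<otimes>\<^bsub>B\<^esub> comm_prod B cs)"
    proof (rule ext)
      fix i
      show "fst w i = (\<lambda>i\<in>{0..<p}. if i < p - 1 then g i
              else prod_listG B (map (\<lambda>j. inv\<^bsub>B\<^esub> g j) [0..<p - 1]) \<otimes>\<^bsub>B\<^esub> comm_prod B cs) i"
      proof (cases "i < p - 1")
        case True then show ?thesis by (simp add: g_def) arith
      next
        case False
        show ?thesis
        proof (cases "i < p")
          case True
          with False have "i = p - 1" by arith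
          then show ?thesis using \<open>P (p - 1) \<otimes>\<^bsub>B\<^esub> c = x\<close> cs(2) Peq p0 by (simp add: g_def x_def)
        next
          case F2: False
          then show ?thesis using gext by (simp add: g_def)
        qed
      qed
    qed
    then show ?thesis using s0 by (metis prod.collapse)
  qed
  then show ?thesis using cs gc p0 by (intro exI[of _ g] exI[of _ cs]) auto
qed

end
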